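(* (i) The infinite fixed point beginning with $a$ of the morphism $a\to aca$, $b\to bc$, $c\to b$ is not $d$-automatic for any $d\ge2$. (ii) The infinite fixed point beginning with $a$ of the morphism $a\to aca$, $c\to cd$, $d\to c$ is not $d$-automatic for any $d\ge 2$.
   Context: For $d\ge 2$, a sequence is $d$-automatic if it is the letter-to-letter image of a fixed point of a morphism all of whose letter-images have length $d$. *)

theory Defs
  imports Main
begin

text \<open>The infinite word w is a fixed point of the morphism s if, for every n, the image under s
  of the length-n prefix of w is a prefix of w (for non-erasing s this is exactly s(w) = w).\<close>

definition is_fixed_point :: "('a \<Rightarrow> 'a list) \<Rightarrow> (nat \<Rightarrow> 'a) \<Rightarrow> bool" where
  "is_fixed_point s w \<longleftrightarrow>
     (\<forall>n. let p = concat (map s (map w [0..<n])) in p = map w [0..<length p])"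

text \<open>d-automatic: letter-to-letter image of a fixed point of a d-uniform morphism over a
  finite alphabet (the alphabet is taken, w.l.o.g., to be a finite set of naturals).\<close>

definition d_automatic :: "nat \<Rightarrow> (nat \<Rightarrow> 'b) \<Rightarrow> bool" where
  "d_automatic d x \<longleftrightarrow>
     (\<exists>(A::nat set) (s::nat \<Rightarrow> nat list) (u::nat \<Rightarrow> nat) (t::nat \<Rightarrow> 'b).
        finite A \<and> (\<forall>l\<in>A. length (s l) = d \<and> set (s l) \<subseteq> A) \<and>
        (\<forall>n. u n \<in> A) \<and> is_fixed_point s u \<and> x = t \<circ> u)"

datatype letter = La | Lb | Lc | Ld

fun sigma1 :: "letter \<Rightarrow> letter list" where
  "sigma1 La = [La, Lc, La]"
| "sigma1 Lb = [Lb, Lc]"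
| "sigma1 Lc = [Lb]"
| "sigma1 Ld = [Ld]"  (* Ld is not in the alphabet {a,b,c} of this morphism; irrelevant *)

fun sigma2 :: "letter \<Rightarrow> letter list" where
  "sigma2 La = [La, Lc, La]"
| "sigma2 Lc = [Lc, Ld]"
| "sigma2 Ld = [Lc]"
| "sigma2 Lb = [Lb]"  (* Lb is not in the alphabet {a,c,d} of this morphism; irrelevant *)

end

theory Submission
  imports Defs "HOL-Library.FuncSet" Complex_Main
begin

lemma fp_uniform:
  assumes fp: "is_fixed_point s u" and len: "\<And>n. length (s (u n)) = d"
  shows "concat (map s (map u [0..<n])) = map u [0..<d*n]"
proof -
  have L: "length (concat (map s (map u [0..<n]))) = d*n"
    by (induction n) (simp_all add: len length_concat)
  show ?thesis using fp unfolding is_fixed_point_def Let_def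
    by (metis L)
qed

lemma fp_step:
  assumes fp: "is_fixed_point s u" and len: "\<And>n. length (s (u n)) = d" and r: "r < d"
  shows "u (d*n + r) = s (u n) ! r"
proof -
  have "concat (map s (map u [0..<Suc n])) = concat (map s (map u [0..<n])) @ s (u n)" by simp
  also have "\<dots> = map u [0..<d*n] @ s (u n)" using fp_uniform[OF fp len] by simp
  finally have e: "map u [0..<d*Suc n] = map u [0..<d*n] @ s (u n)"
    using fp_uniform[OF fp len, of "Suc n"] by simp
  have "map u [0..<d*Suc n] ! (d*n+r) = u (d*n+r)" using r by simp
  moreover have "(map u [0..<d*n] @ s (u n)) ! (d*n+r) = s (u n) ! r" by (simp add: nth_append)
  ultimately show ?thesis using e by simp
qed

lemma kernel:
  assumes fp: "is_fixed_point s u" and len: "\<And>n. length (s (u n)) = d"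
    and eq: "u n = u n'" and r: "r < d^L"
  shows "u (n*d^L + r) = u (n'*d^L + r)"
  using r
proof (induction L arbitrary: r)
  case 0 then show ?case using eq by simp
next
  case (Suc L)
  have dpos: "d > 0" using Suc.prems by (cases "d = 0") auto
  define r1 where "r1 = r div d"
  define r0 where "r0 = r mod d"
  have r0: "r0 < d" using dpos by (simp add: r0_def)
  have r1: "r1 < d^L" using Suc.prems by (simp add: r1_def less_mult_imp_div_less mult.commute)
  have decomp: "\<And>m. m*d^Suc L + r = d*(m*d^L + r1) + r0"
    by (simp add: r0_def r1_def algebra_simps)
  show ?case using fp_step[OF fp len r0] Suc.IH[OF r1] decomp by metis
qed

lemma sum_split_blocks:
  fixes f :: "nat \<Rightarrow> 'a::comm_monoid_add"
  shows "(\<Sum>r<a*b. f r) = (\<Sum>q<a. \<Sum>r<b. f (q*b + r))"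
proof -
  have "\<And>q. (\<Sum>r<b. f (q*b + r)) = sum f {q*b..<q*b+b}"
  proof -
    fix q
    have "sum f {q*b..<q*b+b} = sum (\<lambda>r. f (r + q*b)) {0..<b}"
      using sum.shift_bounds_nat_ivl[of f 0 "q*b" b] by (simp add: add.commute)
    then show "(\<Sum>r<b. f (q*b + r)) = sum f {q*b..<q*b+b}" by (simp add: atLeast0LessThan add.commute)
  qed
  then show ?thesis using sum.nat_group[of "\<lambda>r. f r" b a] by simp
qed

locale autom =
  fixes d :: nat and A :: "nat set" and s :: "nat \<Rightarrow> nat list" and u :: "nat \<Rightarrow> nat"
    and x :: "nat \<Rightarrow> 'b" and G :: "'b set" and g :: "'b \<Rightarrow> int" and c K :: real
  assumes d2: "d \<ge> 2" and finA: "finite A"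
    and sA: "\<forall>l\<in>A. length (s l) = d \<and> set (s l) \<subseteq> A"
    and uA: "\<forall>n. u n \<in> A" and fp: "is_fixed_point s u"
    and xker: "\<And>n n'. u n = u n' \<Longrightarrow> x n = x n'"
    and long: "\<forall>N. \<exists>i. \<forall>k<N. x (i+k) \<in> G"
    and irr: "c \<notin> \<rat>"
    and bnd: "\<forall>i n. (\<forall>k<n. x (i+k) \<in> G) \<longrightarrow> \<bar>(\<Sum>k<n. real_of_int (g (x (i+k)))) - c * n\<bar> \<le> K"
begin

lemma len: "length (s (u n)) = d" using sA uA by auto

definition good :: "nat \<Rightarrow> nat \<Rightarrow> bool" where
  "good L n \<longleftrightarrow> (\<forall>r<d^L. x (n*d^L + r) \<in> G)"
definition wsum :: "nat \<Rightarrow> nat \<Rightarrow> int" where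
  "wsum L n = (\<Sum>r<d^L. g (x (n*d^L + r)))"

lemma kern: assumes "u n = u n'" shows "good L n = good L n'" "wsum L n = wsum L n'"
proof -
  have "\<And>r. r < d^L \<Longrightarrow> x (n*d^L + r) = x (n'*d^L + r)"
    using kernel[OF fp len assms] xker by blast
  then show "good L n = good L n'" "wsum L n = wsum L n'"
    unfolding good_def wsum_def by (auto intro!: sum.cong)
qed

lemma idx: "(n*d^M + q)*d^L + r = n*d^(L+M) + (q*d^L + r)"
  by (simp add: algebra_simps power_add)

lemma wsum_split: "wsum (L+M) n = (\<Sum>q<d^M. wsum L (n*d^M + q))"
proof -
  have "wsum (L+M) n = (\<Sum>r<d^M*d^L. g (x (n*d^(L+M) + r)))"
    by (simp add: wsum_def power_add mult.commute)
  also have "\<dots> = (\<Sum>q<d^M. \<Sum>r<d^L. g (x (n*d^(L+M) + (q*d^L + r))))"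
    by (rule sum_split_blocks)
  also have "\<dots> = (\<Sum>q<d^M. wsum L (n*d^M + q))"
    by (simp add: wsum_def idx)
  finally show ?thesis .
qed

lemma good_split: "good (L+M) n \<longleftrightarrow> (\<forall>q<d^M. good L (n*d^M + q))"
proof
  assume H: "good (L+M) n"
  show "\<forall>q<d^M. good L (n*d^M + q)"
  proof (intro allI impI)
    fix q assume q: "q < d^M"
    show "good L (n*d^M + q)" unfolding good_def
    proof (intro allI impI)
      fix r assume r: "r < d^L"
      have "q*d^L + r < d^(L+M)"
      proof -
        have "q*d^L + r < q*d^L + d^L" using r by simp
        also have "\<dots> = (q+1)*d^L" by simp
        also have "\<dots> \<le> d^M * d^L" using q by (intro mult_right_mono) auto
        finally show ?thesis by (simp add: power_add mult.commute)
      qed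
      then show "x ((n*d^M + q)*d^L + r) \<in> G" using H unfolding good_def idx by blast
    qed
  qed
next
  assume H: "\<forall>q<d^M. good L (n*d^M + q)"
  show "good (L+M) n" unfolding good_def
  proof (intro allI impI)
    fix r assume r: "r < d^(L+M)"
    have dp: "d^L > 0" using d2 by simp
    define q where "q = r div d^L"
    define r' where "r' = r mod d^L"
    have q: "q < d^M" using r by (simp add: q_def power_add less_mult_imp_div_less mult.commute)
    have r': "r' < d^L" using dp by (simp add: r'_def)
    have "r = q*d^L + r'" by (simp add: q_def r'_def div_mult_mod_eq)
    moreover have "x ((n*d^M + q)*d^L + r') \<in> G" using H q r' by (auto simp: good_def)
    ultimately show "x (n*d^(L+M) + r) \<in> G" by (simp add: idx)
  qed
qed

definition R where "R = range u"
definition rep where "rep \<alpha> = (SOME n. u n = \<alpha>)"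
lemma rep: "\<alpha> \<in> R \<Longrightarrow> u (rep \<alpha>) = \<alpha>" unfolding R_def rep_def by (auto intro: someI)
lemma finR: "finite R" using finA uA unfolding R_def by (meson finite_subset image_subsetI)

definition Z where "Z L = {\<alpha>\<in>R. good L (rep \<alpha>)}"

lemma good_Z: "good L n \<longleftrightarrow> u n \<in> Z L"
proof -
  have "u n \<in> R" by (simp add: R_def)
  then show ?thesis unfolding Z_def using kern(1)[of "rep (u n)" n L] rep by auto
qed

lemma Z_step: "Z (Suc L) = {\<alpha>\<in>R. \<forall>q<d. s \<alpha> ! q \<in> Z L}"
proof -
  have "\<And>\<alpha>. \<alpha> \<in> R \<Longrightarrow> good (Suc L) (rep \<alpha>) \<longleftrightarrow> (\<forall>q<d. s \<alpha> ! q \<in> Z L)"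
  proof -
    fix \<alpha> assume a: "\<alpha> \<in> R"
    have "good (Suc L) (rep \<alpha>) \<longleftrightarrow> (\<forall>q<d. good L (rep \<alpha> * d + q))"
      using good_split[of L 1 "rep \<alpha>"] by simp
    also have "\<dots> \<longleftrightarrow> (\<forall>q<d. s \<alpha> ! q \<in> Z L)"
      using fp_step[OF fp len, of _ "rep \<alpha>"] rep[OF a] good_Z by (simp add: mult.commute)
    finally show "good (Suc L) (rep \<alpha>) \<longleftrightarrow> (\<forall>q<d. s \<alpha> ! q \<in> Z L)" .
  qed
  then show ?thesis unfolding Z_def by auto
qed


lemma Z_sub: "Z L \<subseteq> R" unfolding Z_def by auto

lemma wb: assumes "good L n" shows "\<bar>real_of_int (wsum L n) - c * real (d^L)\<bar> \<le> K"
proof -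
  have "\<forall>k<d^L. x (n*d^L + k) \<in> G" using assms unfolding good_def by auto
  then have "\<bar>(\<Sum>k<d^L. real_of_int (g (x (n*d^L+k)))) - c * real (d^L)\<bar> \<le> K" using bnd by blast
  then show ?thesis unfolding wsum_def by simp
qed

lemma contra: False
proof -
  have "\<not> inj Z"
  proof
    assume "inj Z"
    moreover have "finite (range Z)"
      by (rule finite_subset[of _ "Pow R"]) (use Z_sub finR in auto)
    ultimately show False using finite_imageD by fastforce
  qed
  then obtain a b where ab: "a \<noteq> b" "Z a = Z b" unfolding inj_def by blast
  obtain j0 j1 where j: "j0 < j1" "Z j0 = Z j1"
    using ab by (metis linorder_neqE_nat)
  have Zper: "Z (j0 + k) = Z (j1 + k)" for k
    by (induction k) (use j in \<open>simp_all add: Z_step\<close>)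
  define P where "P = j1 - j0"
  have P: "P > 0" using j by (simp add: P_def)
  have Zm: "Z (j0 + m*P) = Z j0" for m
  proof (induction m)
    case (Suc m)
    have "j0 + Suc m * P = j1 + m*P" using j by (simp add: P_def)
    then show ?case using Zper[of "m*P"] Suc by metis
  qed simp
  have dpos: "d > 0" using d2 by simp
  define D0 where "D0 = d^j0"
  have D0: "D0 > 0" using dpos by (simp add: D0_def)
  obtain i where i: "\<forall>k<2*D0. x (i+k) \<in> G" using long by blast
  define n0 where "n0 = i div D0 + 1"
  have "good j0 n0" unfolding good_def
  proof (intro allI impI)
    fix r assume r: "r < d^j0"
    have e: "i div D0 * D0 + i mod D0 = i" by simp
    have "i mod D0 < D0" using D0 by simp
    moreover have "n0*D0 = i div D0 * D0 + D0" by (simp add: n0_def)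
    moreover have "r < D0" using r by (simp add: D0_def)
    ultimately have "n0*D0 + r = i + (D0 - i mod D0 + r)" and "D0 - i mod D0 + r < 2*D0"
      using e by linarith+
    then show "x (n0*d^j0 + r) \<in> G" using i unfolding D0_def by metis
  qed
  then have n0Z: "u n0 \<in> Z j0" using good_Z by simp
  have goodm: "good (j0 + m*P) n0" for m using n0Z Zm good_Z by simp
  define fl where "fl m = \<lfloor>c * real (d^(j0+m*P))\<rfloor>" for m
  define \<delta> where "\<delta> m = restrict (\<lambda>\<beta>. if \<beta> \<in> Z j0 then wsum (j0+m*P) (rep \<beta>) - fl m else 0) R" for m
  define B where "B = \<lceil>K\<rceil> + 1"
  have \<delta>in: "\<delta> m \<in> (\<Pi>\<^sub>E \<beta>\<in>R. {-B..B})" for m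
  proof -
    have "\<And>\<beta>. \<beta> \<in> R \<Longrightarrow> \<beta> \<in> Z j0 \<Longrightarrow> wsum (j0+m*P) (rep \<beta>) - fl m \<in> {-B..B}"
    proof -
      fix \<beta> assume "\<beta> \<in> R" "\<beta> \<in> Z j0"
      then have "good (j0+m*P) (rep \<beta>)" using Zm[of m] unfolding Z_def by auto
      from wb[OF this] have h: "\<bar>real_of_int (wsum (j0+m*P) (rep \<beta>)) - c * real (d^(j0+m*P))\<bar> \<le> K" .
      have f1: "real_of_int (fl m) \<le> c * real (d^(j0+m*P))" "c * real (d^(j0+m*P)) < real_of_int (fl m) + 1"
        unfolding fl_def by linarith+
      have kc: "K \<le> real_of_int \<lceil>K\<rceil>" by linarith
      have "real_of_int (wsum (j0+m*P) (rep \<beta>)) - real_of_int (fl m) < real_of_int \<lceil>K\<rceil> + 1"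
           "- real_of_int \<lceil>K\<rceil> - 1 < real_of_int (wsum (j0+m*P) (rep \<beta>)) - real_of_int (fl m)"
        using h f1 kc unfolding abs_le_iff by linarith+
      then have "wsum (j0+m*P) (rep \<beta>) - fl m < \<lceil>K\<rceil> + 1" "- \<lceil>K\<rceil> - 1 < wsum (j0+m*P) (rep \<beta>) - fl m"
        by linarith+
      then show "wsum (j0+m*P) (rep \<beta>) - fl m \<in> {-B..B}" unfolding B_def by simp
    qed
    moreover have "0 \<le> K" using bnd by force
    then have "0 \<le> B" unfolding B_def by linarith
    ultimately show ?thesis unfolding \<delta>_def by (auto simp: PiE_iff)
  qed
  have "\<not> inj \<delta>"
  proof
    assume "inj \<delta>"
    moreover have "finite (range \<delta>)"
      by (rule finite_subset[of _ "\<Pi>\<^sub>E \<beta>\<in>R. {-B..B}"]) (use \<delta>in finR in \<open>auto intro: finite_PiE\<close>)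
    ultimately show False using finite_imageD by fastforce
  qed
  then obtain m1 m2 where m12: "m1 \<noteq> m2" "\<delta> m1 = \<delta> m2" unfolding inj_def by blast
  obtain m m' where mm: "m < m'" "\<delta> m = \<delta> m'"
    using m12 by (metis linorder_neqE_nat)
  have key: "wsum (j0 + (mm+k)*P) n0 = int (d^(k*P)) * fl mm + (\<Sum>q<d^(k*P). \<delta> mm (u (n0*d^(k*P) + q)))" for mm k
  proof -
    have e: "j0 + (mm+k)*P = (j0 + mm*P) + k*P" by (simp add: algebra_simps)
    have g: "good (j0 + mm*P) (n0*d^(k*P) + q)" if "q < d^(k*P)" for q
      using goodm[of "mm+k"] good_split[of "j0+mm*P" "k*P" n0] that e by metis
    have w: "wsum (j0 + mm*P) (n0*d^(k*P) + q) = \<delta> mm (u (n0*d^(k*P) + q)) + fl mm" if "q < d^(k*P)" for q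
    proof -
      let ?p = "n0*d^(k*P) + q"
      have uR: "u ?p \<in> R" by (simp add: R_def)
      have uZ: "u ?p \<in> Z j0" using g[OF that] good_Z Zm by simp
      have "wsum (j0 + mm*P) (rep (u ?p)) = wsum (j0 + mm*P) ?p" using kern(2) rep[OF uR] by metis
      then show ?thesis using uR uZ unfolding \<delta>_def by simp
    qed
    have "wsum (j0 + (mm+k)*P) n0 = (\<Sum>q<d^(k*P). wsum (j0 + mm*P) (n0*d^(k*P) + q))"
      using wsum_split[of "j0+mm*P" "k*P" n0] e by (simp only:)
    also have "\<dots> = (\<Sum>q<d^(k*P). \<delta> mm (u (n0*d^(k*P) + q)) + fl mm)"
      using w by (intro sum.cong) auto
    also have "\<dots> = int (d^(k*P)) * fl mm + (\<Sum>q<d^(k*P). \<delta> mm (u (n0*d^(k*P) + q)))"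
      by (simp add: sum.distrib)
    finally show ?thesis .
  qed
  define y where "y mm = c * real (d^(j0+mm*P))" for mm
  have fly: "fl mm = \<lfloor>y mm\<rfloor>" for mm unfolding fl_def y_def by simp
  define E where "E = real (d^P)"
  have E: "E > 1" unfolding E_def using d2 P by (simp add: one_less_power)
  have ineq: "E^k * \<bar>(y m - fl m) - (y m' - fl m')\<bar> \<le> 2*K" for k
  proof -
    define S where "S = (\<Sum>q<d^(k*P). \<delta> m (u (n0*d^(k*P) + q)))"
    have S': "S = (\<Sum>q<d^(k*P). \<delta> m' (u (n0*d^(k*P) + q)))" unfolding S_def using mm by simp
    have pw: "real (d^(j0+(mm+k)*P)) = E^k * real (d^(j0+mm*P))" for mm
      unfolding E_def by (simp add: power_add power_mult algebra_simps)
    have h1: "\<bar>real_of_int (wsum (j0 + (m+k)*P) n0) - E^k * y m\<bar> \<le> K"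
      using wb[OF goodm[of "m+k"]] pw[of m] unfolding y_def by (simp add: algebra_simps)
    have h2: "\<bar>real_of_int (wsum (j0 + (m'+k)*P) n0) - E^k * y m'\<bar> \<le> K"
      using wb[OF goodm[of "m'+k"]] pw[of m'] unfolding y_def by (simp add: algebra_simps)
    have k1: "real_of_int (wsum (j0 + (m+k)*P) n0) = E^k * fl m + S"
      using key[of m k] unfolding S_def E_def by (simp add: power_mult mult.commute[of k P])
    have k2: "real_of_int (wsum (j0 + (m'+k)*P) n0) = E^k * fl m' + S"
      using key[of m' k] unfolding S' E_def by (simp add: power_mult mult.commute[of k P])
    have "E^k * ((y m - fl m) - (y m' - fl m')) =
          (real_of_int (wsum (j0 + (m'+k)*P) n0) - E^k * y m') - (real_of_int (wsum (j0 + (m+k)*P) n0) - E^k * y m)"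
      using k1 k2 by (simp add: algebra_simps)
    then have "\<bar>E^k * ((y m - fl m) - (y m' - fl m'))\<bar> \<le> 2*K" using h1 h2 by linarith
    then show ?thesis using E by (simp add: abs_mult)
  qed
  have fr: "(y m - fl m) - (y m' - fl m') = 0"
  proof (rule ccontr)
    assume ne: "(y m - fl m) - (y m' - fl m') \<noteq> 0"
    define \<epsilon> where "\<epsilon> = \<bar>(y m - fl m) - (y m' - fl m')\<bar>"
    have ep: "\<epsilon> > 0" using ne unfolding \<epsilon>_def by simp
    obtain k where "2*K/\<epsilon> < E^k" using real_arch_pow[OF E] by blast
    then have "2*K < E^k * \<epsilon>" using ep by (simp add: field_simps)
    then show False using ineq[of k] unfolding \<epsilon>_def by simp
  qed
  have pm: "real (d^(j0+m*P)) < real (d^(j0+m'*P))"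
    using mm(1) P d2 by (simp add: power_strict_increasing)
  have "c = real_of_int (fl m' - fl m) / (real (d^(j0+m'*P)) - real (d^(j0+m*P)))"
    using fr pm unfolding y_def by (simp add: field_simps)
  also have "\<dots> \<in> \<rat>" by simp
  finally show False using irr by simp
qed
end

lemma sum_shift_add: "(\<Sum>k<a+b. f k) = (\<Sum>k<a. f k) + (\<Sum>k<b. f (a+k::nat))" for f :: "nat \<Rightarrow> 'a::comm_monoid_add"
  by (induction b) (simp_all add: add.assoc)

locale morph =
  fixes \<sigma> :: "letter \<Rightarrow> letter list" and x :: "nat \<Rightarrow> letter" and lw :: "letter \<Rightarrow> real" and \<theta> :: real
  assumes fp: "is_fixed_point \<sigma> x"
    and ne: "\<And>\<alpha>. \<sigma> \<alpha> \<noteq> []"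
    and eig: "\<And>\<alpha>. sum_list (map lw (\<sigma> \<alpha>)) = - \<theta> * lw \<alpha>"
    and th: "0 < \<theta>" "\<theta> < 1"
    and x0: "length (\<sigma> (x 0)) \<ge> 2"
begin

definition pre where "pre m = concat (map \<sigma> (map x [0..<m]))"
definition pos where "pos m = length (pre m)"

lemma pre_eq: "pre m = map x [0..<pos m]"
  using fp unfolding is_fixed_point_def pre_def pos_def Let_def by metis

lemma pos_Suc: "pos (Suc m) = pos m + length (\<sigma> (x m))"
  by (simp add: pos_def pre_def)

lemma xpos: assumes "r < length (\<sigma> (x m))" shows "x (pos m + r) = \<sigma> (x m) ! r"
proof -
  have "pre (Suc m) = pre m @ \<sigma> (x m)" by (simp add: pre_def)
  then have "map x [0..<pos (Suc m)] = map x [0..<pos m] @ \<sigma> (x m)" using pre_eq by metis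
  then have "map x [0..<pos (Suc m)] ! (pos m + r) = (map x [0..<pos m] @ \<sigma> (x m)) ! (pos m + r)" by simp
  then show ?thesis using assms by (simp add: nth_append pos_Suc)
qed

lemma smono: "strict_mono pos"
  unfolding strict_mono_Suc_iff using ne by (simp add: pos_Suc)

lemma pos_ge: "pos (Suc m) \<ge> Suc m + 1"
proof (induction m)
  case 0 then show ?case using x0 by (simp add: pos_Suc pos_def pre_def)
next
  case (Suc m) then show ?case using ne[of "x (Suc m)"] pos_Suc[of "Suc m"] by (cases "\<sigma> (x (Suc m))") auto
qed

lemma decomp: "\<exists>m r. p = pos m + r \<and> r < length (\<sigma> (x m))"
proof (induction p)
  case 0 then show ?case using ne[of "x 0"] by (rule_tac x=0 in exI) (auto simp: pos_def pre_def)
next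
  case (Suc p)
  then obtain m r where mr: "p = pos m + r" "r < length (\<sigma> (x m))" by blast
  show ?case
  proof (cases "Suc r < length (\<sigma> (x m))")
    case True then show ?thesis using mr by (rule_tac x=m in exI, rule_tac x="Suc r" in exI) simp
  next
    case False
    then have "Suc p = pos (Suc m) + 0" using mr by (simp add: pos_Suc)
    then show ?thesis using ne[of "x (Suc m)"] by blast
  qed
qed

definition Lam where "Lam n = (\<Sum>k<n. lw (x k))"

lemma Lam_pos: "Lam (pos m + r) = - \<theta> * Lam m + (\<Sum>k<r. lw (\<sigma> (x m) ! k))" if "r \<le> length (\<sigma> (x m))"
  using that
proof (induction m arbitrary: r)
  case 0
  have "Lam (pos 0 + r) = (\<Sum>k<r. lw (x k))" by (simp add: Lam_def pos_def pre_def)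
  also have "\<dots> = (\<Sum>k<r. lw (\<sigma> (x 0) ! k))" using xpos[of _ 0] 0 by (intro sum.cong) (auto simp: pos_def pre_def)
  finally show ?case by (simp add: Lam_def)
next
  case (Suc m)
  have full: "Lam (pos (Suc m)) = - \<theta> * Lam (Suc m)"
  proof -
    have "Lam (pos (Suc m)) = Lam (pos m + length (\<sigma> (x m)))" by (simp add: pos_Suc)
    also have "\<dots> = - \<theta> * Lam m + (\<Sum>k<length (\<sigma> (x m)). lw (\<sigma> (x m) ! k))" using Suc.IH by simp
    also have "(\<Sum>k<length (\<sigma> (x m)). lw (\<sigma> (x m) ! k)) = sum_list (map lw (\<sigma> (x m)))"
      by (simp add: sum_list_sum_nth atLeast0LessThan)
    also have "\<dots> = - \<theta> * lw (x m)" by (rule eig)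
    finally show ?thesis by (simp add: Lam_def algebra_simps)
  qed
  have "Lam (pos (Suc m) + r) = Lam (pos (Suc m)) + (\<Sum>k<r. lw (x (pos (Suc m) + k)))"
    unfolding Lam_def by (rule sum_shift_add)
  also have "(\<Sum>k<r. lw (x (pos (Suc m) + k))) = (\<Sum>k<r. lw (\<sigma> (x (Suc m)) ! k))"
    using xpos[of _ "Suc m"] Suc.prems by (intro sum.cong) auto
  finally show ?case using full by simp
qed

definition C0 where "C0 \<alpha> = (\<Sum>k<length (\<sigma> \<alpha>). \<bar>lw (\<sigma> \<alpha> ! k)\<bar>)"
definition C where "C = C0 La + C0 Lb + C0 Lc + C0 Ld"

lemma C0_le: "C0 \<alpha> \<le> C"
proof -
  have "\<And>\<beta>. 0 \<le> C0 \<beta>" unfolding C0_def by (simp add: sum_nonneg)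
  then show ?thesis unfolding C_def by (cases \<alpha>) (auto simp: add_nonneg_nonneg)
qed

lemma part_le: "r \<le> length (\<sigma> \<alpha>) \<Longrightarrow> \<bar>\<Sum>k<r. lw (\<sigma> \<alpha> ! k)\<bar> \<le> C"
proof -
  assume r: "r \<le> length (\<sigma> \<alpha>)"
  have "\<bar>\<Sum>k<r. lw (\<sigma> \<alpha> ! k)\<bar> \<le> (\<Sum>k<r. \<bar>lw (\<sigma> \<alpha> ! k)\<bar>)" by (rule sum_abs)
  also have "\<dots> \<le> C0 \<alpha>" unfolding C0_def using r by (intro sum_mono2) auto
  finally show ?thesis using C0_le[of \<alpha>] by linarith
qed

lemma Lam_bound: "\<bar>Lam n\<bar> \<le> C / (1 - \<theta>)"
proof (induction n rule: less_induct)
  case (less n)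
  have Cnn: "0 \<le> C" using C0_le[of La] unfolding C0_def by (meson order_trans sum_nonneg abs_ge_zero)
  show ?case
  proof (cases "n = 0")
    case True then show ?thesis using Cnn th by (simp add: Lam_def)
  next
    case False
    obtain m r where mr: "n = pos m + r" "r < length (\<sigma> (x m))" using decomp by blast
    have "m < n"
    proof (cases m)
      case 0 then show ?thesis using False by simp
    next
      case (Suc m') then show ?thesis using pos_ge[of m'] mr by simp
    qed
    then have IH: "\<bar>Lam m\<bar> \<le> C / (1 - \<theta>)" by (rule less.IH)
    have "Lam n = - \<theta> * Lam m + (\<Sum>k<r. lw (\<sigma> (x m) ! k))" using Lam_pos mr by simp
    moreover have "\<bar>- \<theta> * Lam m\<bar> = \<theta> * \<bar>Lam m\<bar>" using th by (simp add: abs_mult)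
    moreover have "\<bar>- \<theta> * Lam m + (\<Sum>k<r. lw (\<sigma> (x m) ! k))\<bar> \<le> \<bar>- \<theta> * Lam m\<bar> + \<bar>\<Sum>k<r. lw (\<sigma> (x m) ! k)\<bar>"
      by (rule abs_triangle_ineq)
    ultimately have "\<bar>Lam n\<bar> \<le> \<theta> * \<bar>Lam m\<bar> + C" using part_le[of r "x m"] mr by simp
    also have "\<dots> \<le> \<theta> * (C / (1 - \<theta>)) + C" using mult_left_mono[OF IH, of \<theta>] th by simp
    also have "\<dots> = C / (1 - \<theta>)" using th by (simp add: field_simps)
    finally show ?thesis .
  qed
qed

lemma factor_bound: "\<bar>\<Sum>k<n. lw (x (i+k))\<bar> \<le> 2 * (C / (1 - \<theta>))"
proof -
  have "(\<Sum>k<n. lw (x (i+k))) = Lam (i+n) - Lam i" unfolding Lam_def by (simp add: sum_shift_add)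
  then show ?thesis using Lam_bound[of "i+n"] Lam_bound[of i] by linarith
qed

lemma long:
  assumes G: "\<And>\<alpha>. \<alpha> \<in> G \<Longrightarrow> set (\<sigma> \<alpha>) \<subseteq> G"
    and \<beta>: "\<beta> \<in> G" "\<sigma> \<beta> ! 0 = \<beta>" "length (\<sigma> \<beta>) \<ge> 2" and i0: "x i0 = \<beta>"
  shows "\<exists>i. \<forall>k<N. x (i+k) \<in> G"
proof -
  have "\<exists>i n. N \<le> n \<and> 0 < n \<and> x i = \<beta> \<and> (\<forall>k<n. x (i+k) \<in> G)" for N
  proof (induction N)
    case 0 then show ?case using i0 \<beta> by (rule_tac x=i0 in exI, rule_tac x=1 in exI) auto
  next
    case (Suc N)
    then obtain i n where H: "N \<le> n" "0 < n" "x i = \<beta>" "\<forall>k<n. x (i+k) \<in> G" by blast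
    have mono_add: "pos a + j \<le> pos (a + j)" for a j
    proof (induction j)
      case (Suc j)
      have "length (\<sigma> (x (a+j))) \<ge> 1" using ne[of "x (a+j)"] by (cases "\<sigma> (x (a+j))") auto
      then show ?case using Suc by (simp add: pos_Suc)
    qed simp
    have p1: "pos (Suc i) \<ge> pos i + 2" using H(3) \<beta>(3) by (simp add: pos_Suc)
    have "pos (Suc i) + (n - 1) \<le> pos (Suc i + (n-1))" by (rule mono_add)
    then have len: "pos (i+n) \<ge> pos i + n + 1" using p1 H(2) by simp
    have xp: "x (pos i) = \<beta>" using xpos[of 0 i] H(3) \<beta> ne[of \<beta>] by simp
    have allG: "\<forall>k<pos (i+n) - pos i. x (pos i + k) \<in> G"
    proof (intro allI impI)
      fix k assume k: "k < pos (i+n) - pos i"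
      obtain m r where mr: "pos i + k = pos m + r" "r < length (\<sigma> (x m))" using decomp by blast
      have "i \<le> m"
      proof (rule ccontr)
        assume "\<not> i \<le> m"
        then have "pos (Suc m) \<le> pos i" using smono by (simp add: strict_mono_less_eq)
        then show False using mr by (simp add: pos_Suc)
      qed
      moreover have "m < i + n"
      proof (rule ccontr)
        assume "\<not> m < i + n"
        then have "pos (i+n) \<le> pos m" using smono by (simp add: strict_mono_less_eq)
        then show False using mr k by simp
      qed
      ultimately have mi: "m - i < n" by linarith
      have "x (i + (m - i)) \<in> G" by (rule H(4)[rule_format, OF mi])
      moreover have "i + (m - i) = m" using \<open>i \<le> m\<close> by linarith
      ultimately have xm: "x m \<in> G" by metis
      have "\<sigma> (x m) ! r \<in> set (\<sigma> (x m))" using mr(2) by (rule nth_mem)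
      then have "\<sigma> (x m) ! r \<in> G" using G[OF xm] by (rule subsetD[rotated])
      moreover have "x (pos i + k) = \<sigma> (x m) ! r" unfolding mr(1) by (rule xpos[OF mr(2)])
      ultimately show "x (pos i + k) \<in> G" by simp
    qed
    have "Suc N \<le> pos (i+n) - pos i" "0 < pos (i+n) - pos i" using len H(1) by linarith+
    then show ?case using xp allG by (intro exI[of _ "pos i"] exI[of _ "pos (i+n) - pos i"]) simp
  qed
  then obtain i n where "N \<le> n" "\<forall>k<n. x (i+k) \<in> G" by blast
  then have "\<forall>k<N. x (i+k) \<in> G" by auto
  then show ?thesis by blast
qed

end

lemma not_automatic:
  fixes x :: "nat \<Rightarrow> 'b" and G :: "'b set" and g :: "'b \<Rightarrow> int" and c K :: real
  assumes d2: "d \<ge> 2" and irr: "c \<notin> \<rat>"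
    and long: "\<forall>N. \<exists>i. \<forall>k<N. x (i+k) \<in> G"
    and bnd: "\<forall>i n. (\<forall>k<n. x (i+k) \<in> G) \<longrightarrow> \<bar>(\<Sum>k<n. real_of_int (g (x (i+k)))) - c * n\<bar> \<le> K"
  shows "\<not> d_automatic d x"
proof
  assume "d_automatic d x"
  then obtain A s u and t :: "nat \<Rightarrow> 'b" where H: "finite A" "\<forall>l\<in>A. length (s l) = d \<and> set (s l) \<subseteq> A"
    "\<forall>n. u n \<in> A" "is_fixed_point s u" "x = t \<circ> u" unfolding d_automatic_def by blast
  have "autom d A s u x G g c K"
    using H d2 irr long bnd by unfold_locales auto
  then show False by (rule autom.contra)
qed

definition \<theta> :: real where "\<theta> = (sqrt 5 - 1) / 2"

lemma th_sq: "\<theta>^2 = 1 - \<theta>"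
  unfolding \<theta>_def by (simp add: power2_eq_square field_simps)

lemma th_pos: "0 < \<theta>" "\<theta> < 1"
proof -
  have "1 < sqrt 5" by (rule real_less_rsqrt) simp
  have "sqrt 5 < 3" by (rule real_less_lsqrt) simp_all
  with \<open>1 < sqrt 5\<close> show "0 < \<theta>" "\<theta> < 1" unfolding \<theta>_def by simp_all
qed

lemma no_nat_sol: assumes "coprime m (n::nat)" "m^2 + m*n = n^2" shows False
proof (cases "even n")
  case True
  then have "even (m^2 + m*n)" using assms(2) by simp
  then have "even m" using True by simp
  then show False using True assms(1) by auto
next
  case False
  then have "odd (m^2 + m*n)" using assms(2) by simp
  then show False using False by (cases "even m") auto
qed

lemma th_irr: "\<theta> \<notin> \<rat>"
proof
  assume "\<theta> \<in> \<rat>"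
  then obtain m n :: nat where mn: "n \<noteq> 0" "\<bar>\<theta>\<bar> = real m / real n" "coprime m n"
    by (rule Rats_abs_nat_div_natE)
  then have t: "\<theta> = real m / real n" using th_pos by simp
  have "(real m / real n)^2 = 1 - real m / real n" using th_sq t by simp
  then have "real m ^2 + real m * real n = real n ^2" using mn(1) by (simp add: field_simps power2_eq_square)
  then have "m^2 + m*n = n^2" by (metis of_nat_add of_nat_mult of_nat_power of_nat_eq_iff)
  then show False using no_nat_sol mn(3) by blast
qed

lemma th_sq': "\<theta> * \<theta> = 1 - \<theta>" using th_sq by (simp add: power2_eq_square)

lemma bnd_conv:
  assumes "\<And>k. k < n \<Longrightarrow> lw (x (i+k)) = real_of_int (g (x (i+k))) - \<theta>"
  shows "(\<Sum>k<n. real_of_int (g (x (i+k)))) - \<theta> * real n = (\<Sum>k<n. lw (x (i+k)))"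
proof -
  have "(\<Sum>k<n. lw (x (i+k))) = (\<Sum>k<n. real_of_int (g (x (i+k))) - \<theta>)"
    using assms by (intro sum.cong) auto
  also have "\<dots> = (\<Sum>k<n. real_of_int (g (x (i+k)))) - \<theta> * real n"
    by (simp add: sum_subtractf mult.commute)
  finally show ?thesis by simp
qed

lemma part1:
  assumes fpx: "is_fixed_point sigma1 x" and x0: "x 0 = La" and d2: "d \<ge> 2"
  shows "\<not> d_automatic d x"
proof -
  define lw where "lw \<alpha> = (case \<alpha> of La \<Rightarrow> \<theta>/(2+\<theta>) | Lb \<Rightarrow> 1-\<theta> | Lc \<Rightarrow> -\<theta> | Ld \<Rightarrow> 0)" for \<alpha>
  have t2: "2 + \<theta> \<noteq> 0" using th_pos by simp
  interpret M: morph sigma1 x lw \<theta>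
  proof
    show "is_fixed_point sigma1 x" by (rule fpx)
    show "\<And>\<alpha>. sigma1 \<alpha> \<noteq> []" by (case_tac \<alpha>) auto
    show "\<And>\<alpha>. sum_list (map lw (sigma1 \<alpha>)) = - \<theta> * lw \<alpha>"
    proof -
      fix \<alpha> show "sum_list (map lw (sigma1 \<alpha>)) = - \<theta> * lw \<alpha>"
      proof (cases \<alpha>)
        case La then show ?thesis using t2 th_sq' by (simp add: lw_def field_simps)
      next
        case Lb then show ?thesis using t2 th_sq' by (simp add: lw_def field_simps; simp add: algebra_simps)
      next
        case Lc then show ?thesis using t2 th_sq' by (simp add: lw_def field_simps; simp add: algebra_simps)
      next
        case Ld then show ?thesis using t2 th_sq' by (simp add: lw_def field_simps; simp add: algebra_simps)
      qed
    qed
    show "0 < \<theta>" "\<theta> < 1" by (rule th_pos)+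
    show "2 \<le> length (sigma1 (x 0))" using x0 by simp
  qed
  have x1: "x 1 = Lc" using M.xpos[of 1 0] x0 by (simp add: M.pos_def M.pre_def)
  have p1: "M.pos 1 = 3" using x0 by (simp add: M.pos_def M.pre_def)
  have x3: "x 3 = Lb" using M.xpos[of 0 1] x1 p1 by simp
  have long: "\<forall>N. \<exists>i. \<forall>k<N. x (i+k) \<in> {Lb, Lc}"
  proof
    fix N show "\<exists>i. \<forall>k<N. x (i+k) \<in> {Lb, Lc}"
      by (rule M.long[of "{Lb,Lc}" Lb 3]) (auto simp: x3 elim: sigma1.elims)
  qed
  have bnd: "\<forall>i n. (\<forall>k<n. x (i+k) \<in> {Lb,Lc}) \<longrightarrow>
      \<bar>(\<Sum>k<n. real_of_int ((\<lambda>\<alpha>. if \<alpha> = Lb then 1 else 0) (x (i+k)))) - \<theta> * n\<bar> \<le> 2 * (M.C / (1 - \<theta>))"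
  proof (intro allI impI)
    fix i n assume H: "\<forall>k<n. x (i+k) \<in> {Lb,Lc}"
    have "(\<Sum>k<n. real_of_int ((\<lambda>\<alpha>. if \<alpha> = Lb then 1 else 0) (x (i+k)))) - \<theta> * n = (\<Sum>k<n. lw (x (i+k)))"
      by (rule bnd_conv) (use H in \<open>auto simp: lw_def\<close>)
    then show "\<bar>(\<Sum>k<n. real_of_int ((\<lambda>\<alpha>. if \<alpha> = Lb then 1 else 0) (x (i+k)))) - \<theta> * n\<bar> \<le> 2 * (M.C / (1 - \<theta>))"
      using M.factor_bound[of i n] by simp
  qed
  show ?thesis by (rule not_automatic[OF d2 th_irr long bnd])
qed

lemma part2:
  assumes fpx: "is_fixed_point sigma2 x" and x0: "x 0 = La" and d2: "d \<ge> 2"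
  shows "\<not> d_automatic d x"
proof -
  define lw where "lw \<alpha> = (case \<alpha> of La \<Rightarrow> -(1-\<theta>)/(2+\<theta>) | Lc \<Rightarrow> 1-\<theta> | Ld \<Rightarrow> -\<theta> | Lb \<Rightarrow> 0)" for \<alpha>
  have t2: "2 + \<theta> \<noteq> 0" using th_pos by simp
  interpret M: morph sigma2 x lw \<theta>
  proof
    show "is_fixed_point sigma2 x" by (rule fpx)
    show "\<And>\<alpha>. sigma2 \<alpha> \<noteq> []" by (case_tac \<alpha>) auto
    show "\<And>\<alpha>. sum_list (map lw (sigma2 \<alpha>)) = - \<theta> * lw \<alpha>"
    proof -
      fix \<alpha> show "sum_list (map lw (sigma2 \<alpha>)) = - \<theta> * lw \<alpha>"
      proof (cases \<alpha>)
        case La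
        define q where "q = (1-\<theta>)/(2+\<theta>)"
        have "q * (2+\<theta>) = 1 - \<theta>" using t2 unfolding q_def by simp
        then have ha: "2 * q + \<theta> * q = 1 - \<theta>" by (simp add: algebra_simps)
        have "sum_list (map lw (sigma2 \<alpha>)) = - q + (1 - \<theta>) + - q" "lw \<alpha> = - q"
          using La by (simp_all add: lw_def q_def minus_divide_left)
        then show ?thesis using ha by simp
      next
        case Lb then show ?thesis using t2 th_sq' by (simp add: lw_def field_simps; simp add: algebra_simps)
      next
        case Lc then show ?thesis using t2 th_sq' by (simp add: lw_def field_simps; simp add: algebra_simps)
      next
        case Ld then show ?thesis using t2 th_sq' by (simp add: lw_def field_simps; simp add: algebra_simps)
      qed
    qed
    show "0 < \<theta>" "\<theta> < 1" by (rule th_pos)+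
    show "2 \<le> length (sigma2 (x 0))" using x0 by simp
  qed
  have x1: "x 1 = Lc" using M.xpos[of 1 0] x0 by (simp add: M.pos_def M.pre_def)
  have long: "\<forall>N. \<exists>i. \<forall>k<N. x (i+k) \<in> {Lc, Ld}"
  proof
    fix N show "\<exists>i. \<forall>k<N. x (i+k) \<in> {Lc, Ld}"
      by (rule M.long[of "{Lc,Ld}" Lc 1]) (use x1 in \<open>auto simp: One_nat_def elim: sigma2.elims\<close>)
  qed
  have bnd: "\<forall>i n. (\<forall>k<n. x (i+k) \<in> {Lc,Ld}) \<longrightarrow>
      \<bar>(\<Sum>k<n. real_of_int ((\<lambda>\<alpha>. if \<alpha> = Lc then 1 else 0) (x (i+k)))) - \<theta> * n\<bar> \<le> 2 * (M.C / (1 - \<theta>))"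
  proof (intro allI impI)
    fix i n assume H: "\<forall>k<n. x (i+k) \<in> {Lc,Ld}"
    have "(\<Sum>k<n. real_of_int ((\<lambda>\<alpha>. if \<alpha> = Lc then 1 else 0) (x (i+k)))) - \<theta> * n = (\<Sum>k<n. lw (x (i+k)))"
      by (rule bnd_conv) (use H in \<open>auto simp: lw_def\<close>)
    then show "\<bar>(\<Sum>k<n. real_of_int ((\<lambda>\<alpha>. if \<alpha> = Lc then 1 else 0) (x (i+k)))) - \<theta> * n\<bar> \<le> 2 * (M.C / (1 - \<theta>))"
      using M.factor_bound[of i n] by simp
  qed
  show ?thesis by (rule not_automatic[OF d2 th_irr long bnd])
qed

theorem corollary5p4:
  shows "(\<forall>x. is_fixed_point sigma1 x \<and> x 0 = La \<longrightarrow> (\<forall>d\<ge>2. \<not> d_automatic d x))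
       \<and> (\<forall>x. is_fixed_point sigma2 x \<and> x 0 = La \<longrightarrow> (\<forall>d\<ge>2. \<not> d_automatic d x))"
  using part1 part2 by blast

end
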